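(* Let $f,g:\{0,1,\dots,n\}\to\mathbb{R}$ be given as arrays, where $f$ is concave and $g$ is oscillating concave. Then the (max,+) convolution $h(k)=\max_{1\le i\le k}\bigl(f(i)+g(k-i)\bigr)$ for $1\le k\le n$ can be computed for all $k$ in $O(n)$ total time.
   Context: $f$ is concave if $f(i+1)-f(i)$ is non-increasing in $i$. A function $g$ is oscillating concave if for all $k$ (whenever the arguments lie in the domain): (1) $g(2k)-g(2k-2)\ge g(2k+2)-g(2k)$; (2) $g(2k+2)-g(2k+1)\ge g(2k+1)-g(2k)$; (3) $g(2k+1)-g(2k)\le g(2k)-g(2k-1)$; (4) $g(2k+1)-g(2k)$ is (weakly) decreasing in $k$; (5) $g(2k)-g(2k-1)$ is (weakly) decreasing in $k$. Arithmetic and comparisons of values take $O(1)$ time. *)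

theory Defs
  imports Complex_Main
begin

definition concave_arr :: "nat \<Rightarrow> (nat \<Rightarrow> real) \<Rightarrow> bool" where
  "concave_arr n f \<longleftrightarrow> (\<forall>i. i + 2 \<le> n \<longrightarrow> f (i+2) - f (i+1) \<le> f (i+1) - f i)"

text \<open>g : {0..n} -> R is oscillating concave (conditions (1)-(5), whenever all
  arguments lie in {0..n}).\<close>
definition osc_concave_arr :: "nat \<Rightarrow> (nat \<Rightarrow> real) \<Rightarrow> bool" where
  "osc_concave_arr n g \<longleftrightarrow>
     (\<forall>k. 1 \<le> k \<and> 2*k+2 \<le> n \<longrightarrow> g (2*k) - g (2*k-2) \<ge> g (2*k+2) - g (2*k)) \<and>
     (\<forall>k. 2*k+2 \<le> n \<longrightarrow> g (2*k+2) - g (2*k+1) \<ge> g (2*k+1) - g (2*k)) \<and>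
     (\<forall>k. 1 \<le> k \<and> 2*k+1 \<le> n \<longrightarrow> g (2*k+1) - g (2*k) \<le> g (2*k) - g (2*k-1)) \<and>
     (\<forall>k. 2*k+3 \<le> n \<longrightarrow> g (2*(k+1)+1) - g (2*(k+1)) \<le> g (2*k+1) - g (2*k)) \<and>
     (\<forall>k. 1 \<le> k \<and> 2*k+2 \<le> n \<longrightarrow> g (2*(k+1)) - g (2*(k+1)-1) \<le> g (2*k) - g (2*k-1))"

definition maxplus_conv :: "(nat \<Rightarrow> real) \<Rightarrow> (nat \<Rightarrow> real) \<Rightarrow> nat \<Rightarrow> real" where
  "maxplus_conv f g k = Max ((\<lambda>i. f i + g (k - i)) ` {1..k})"

text \<open>There is no nat multiplication/division and no conversion real -> nat.\<close>

record mstate =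
  nr :: "nat \<Rightarrow> nat"
  rr :: "nat \<Rightarrow> real"
  outp :: "nat \<Rightarrow> real"

datatype instr =
    NConst nat nat
  | NAdd nat nat nat
  | NSub nat nat nat
  | NLoad nat nat
  | NStore nat nat
  | RAdd nat nat nat
  | RSub nat nat nat
  | RLoad nat nat
  | RStore nat nat
  | ReadF nat nat
  | ReadG nat nat
  | WriteOut nat nat

datatype test =
    NLess nat nat
  | NEq nat nat
  | RLe nat nat

datatype prog =
    Skip
  | Instr instr
  | Seq prog prog
  | If test prog prog
  | While test prog

fun step_instr :: "(nat \<Rightarrow> real) \<Rightarrow> (nat \<Rightarrow> real) \<Rightarrow> instr \<Rightarrow> mstate \<Rightarrow> mstate" where
  "step_instr f g (NConst x c) s = s\<lparr>nr := (nr s)(x := c)\<rparr>"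
| "step_instr f g (NAdd x y z) s = s\<lparr>nr := (nr s)(x := nr s y + nr s z)\<rparr>"
| "step_instr f g (NSub x y z) s = s\<lparr>nr := (nr s)(x := nr s y - nr s z)\<rparr>"
| "step_instr f g (NLoad x y) s = s\<lparr>nr := (nr s)(x := nr s (nr s y))\<rparr>"
| "step_instr f g (NStore x y) s = s\<lparr>nr := (nr s)(nr s x := nr s y)\<rparr>"
| "step_instr f g (RAdd x y z) s = s\<lparr>rr := (rr s)(x := rr s y + rr s z)\<rparr>"
| "step_instr f g (RSub x y z) s = s\<lparr>rr := (rr s)(x := rr s y - rr s z)\<rparr>"
| "step_instr f g (RLoad x y) s = s\<lparr>rr := (rr s)(x := rr s (nr s y))\<rparr>"
| "step_instr f g (RStore x y) s = s\<lparr>rr := (rr s)(nr s x := rr s y)\<rparr>"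
| "step_instr f g (ReadF x y) s = s\<lparr>rr := (rr s)(x := f (nr s y))\<rparr>"
| "step_instr f g (ReadG x y) s = s\<lparr>rr := (rr s)(x := g (nr s y))\<rparr>"
| "step_instr f g (WriteOut x y) s = s\<lparr>outp := (outp s)(nr s x := rr s y)\<rparr>"

fun eval_test :: "test \<Rightarrow> mstate \<Rightarrow> bool" where
  "eval_test (NLess x y) s = (nr s x < nr s y)"
| "eval_test (NEq x y) s = (nr s x = nr s y)"
| "eval_test (RLe x y) s = (rr s x \<le> rr s y)"

inductive exec :: "(nat \<Rightarrow> real) \<Rightarrow> (nat \<Rightarrow> real) \<Rightarrow> prog \<Rightarrow> mstate \<Rightarrow> nat \<Rightarrow> mstate \<Rightarrow> bool"
  for f g where
  exec_Skip: "exec f g Skip s 0 s"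
| exec_Instr: "exec f g (Instr i) s 1 (step_instr f g i s)"
| exec_Seq: "exec f g p s t1 s1 \<Longrightarrow> exec f g q s1 t2 s2 \<Longrightarrow> exec f g (Seq p q) s (t1 + t2) s2"
| exec_IfT: "eval_test b s \<Longrightarrow> exec f g p s t s' \<Longrightarrow> exec f g (If b p q) s (t + 1) s'"
| exec_IfF: "\<not> eval_test b s \<Longrightarrow> exec f g q s t s' \<Longrightarrow> exec f g (If b p q) s (t + 1) s'"
| exec_WhileF: "\<not> eval_test b s \<Longrightarrow> exec f g (While b p) s 1 s"
| exec_WhileT: "eval_test b s \<Longrightarrow> exec f g p s t1 s1 \<Longrightarrow> exec f g (While b p) s1 t2 s2
                 \<Longrightarrow> exec f g (While b p) s (t1 + t2 + 1) s2"

definition init_state :: "nat \<Rightarrow> mstate" where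
  "init_state n = \<lparr>nr = (\<lambda>_. 0)(0 := n), rr = (\<lambda>_. 0), outp = (\<lambda>_. 0)\<rparr>"

end

theory Submission
  imports Defs
begin

definition cmax :: "(nat \<Rightarrow> real) \<Rightarrow> (nat \<Rightarrow> real) \<Rightarrow> nat \<Rightarrow> nat \<Rightarrow> real" where
  "cmax f g c k = Max ((\<lambda>i. f i + g (k - i)) ` {i \<in> {1..k}. (k - i) mod 2 = c})"

lemma D_mono:
  fixes \<psi> :: "nat \<Rightarrow> real"
  assumes A: "\<forall>t. t + 2 \<le> j \<longrightarrow> \<psi>(t+2) - \<psi>(t+1) \<le> \<psi>(t+1) - \<psi> t"
  shows "t \<le> t' \<Longrightarrow> t' + 1 \<le> j \<Longrightarrow> \<psi>(t'+1) - \<psi> t' \<le> \<psi>(t+1) - \<psi> t"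
proof (induction t')
  case 0 then show ?case by simp
next
  case (Suc m)
  show ?case
  proof (cases "t = Suc m")
    case True then show ?thesis by simp
  next
    case False
    then have "t \<le> m" using Suc by simp
    then have "\<psi>(m+1) - \<psi> m \<le> \<psi>(t+1) - \<psi> t" using Suc by simp
    moreover have "\<psi>(m+2) - \<psi>(m+1) \<le> \<psi>(m+1) - \<psi> m" using A Suc by auto
    ultimately show ?thesis by (simp add: add.commute)
  qed
qed

lemma conc_upper:
  fixes \<psi> :: "nat \<Rightarrow> real"
  assumes "\<forall>t. t + 2 \<le> j \<longrightarrow> \<psi>(t+2) - \<psi>(t+1) \<le> \<psi>(t+1) - \<psi> t"
  shows "\<psi> j - \<psi> 0 \<le> real j * (\<psi> 1 - \<psi> 0)"
  using assms
proof (induction j)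
  case 0 show ?case by simp
next
  case (Suc j)
  have IH: "\<psi> j - \<psi> 0 \<le> real j * (\<psi> 1 - \<psi> 0)" using Suc by auto
  have "\<psi> (j+1) - \<psi> j \<le> \<psi>(0+1) - \<psi> 0"
    using D_mono[of "Suc j" \<psi> 0 j] Suc.prems by auto
  then show ?case using IH by (simp add: algebra_simps)
qed

lemma conc_lower:
  fixes \<psi> :: "nat \<Rightarrow> real"
  assumes "\<forall>t. t + 2 \<le> Suc j \<longrightarrow> \<psi>(t+2) - \<psi>(t+1) \<le> \<psi>(t+1) - \<psi> t"
  shows "\<psi> (Suc j) - \<psi> 0 \<ge> real (Suc j) * (\<psi> (Suc j) - \<psi> j)"
  using assms
proof (induction j)
  case 0 show ?case by simp
next
  case (Suc j)
  have IH: "\<psi> (Suc j) - \<psi> 0 \<ge> real (Suc j) * (\<psi> (Suc j) - \<psi> j)" using Suc by auto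
  have d: "\<psi>(j+2) - \<psi>(j+1) \<le> \<psi>(j+1) - \<psi> j" using Suc.prems by auto
  have "real (Suc j) * (\<psi> (Suc (Suc j)) - \<psi> (Suc j)) \<le> real (Suc j) * (\<psi> (Suc j) - \<psi> j)"
    using d by (intro mult_left_mono) auto
  then show ?case using IH by (simp add: algebra_simps)
qed

lemma half:
  fixes A B :: "nat \<Rightarrow> real"
  assumes HA: "\<forall>u. u+4 \<le> n \<longrightarrow> A(u+4) - A(u+2) \<le> A(u+2) - A u"
    and HB: "\<forall>u. u+4 \<le> n \<longrightarrow> B(u+4) - B(u+2) \<le> B(u+2) - B u"
    and j: "1 \<le> j" and a: "a + 2*j \<le> n" and b: "b + 2*j \<le> n"
    and C: "A(a+2) - A a \<le> B(b+2*j) - B(b+2*j-2)"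
  shows "A(a+2*j) + B b \<le> A a + B(b+2*j)"
proof -
  have hA: "\<forall>t. t + 2 \<le> j \<longrightarrow> A(a+2*(t+2)) - A(a+2*(t+1)) \<le> A(a+2*(t+1)) - A (a+2*t)"
  proof (intro allI impI)
    fix t assume "t+2 \<le> j"
    then have "a + 2*t + 4 \<le> n" using a by simp
    moreover have e: "a+2*(t+2) = a+2*t+4" "a+2*(t+1) = a+2*t+2" by simp_all
    ultimately show "A(a+2*(t+2)) - A(a+2*(t+1)) \<le> A(a+2*(t+1)) - A (a+2*t)"
      unfolding e by (intro HA[rule_format])
  qed
  have U: "A(a+2*j) - A a \<le> real j * (A(a+2) - A a)"
    using conc_upper[of j "\<lambda>t. A(a+2*t)", OF hA] by simp
  obtain j' where j': "j = Suc j'" using j by (cases j) auto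
  have hB: "\<forall>t. t + 2 \<le> Suc j' \<longrightarrow> B(b+2*(t+2)) - B(b+2*(t+1)) \<le> B(b+2*(t+1)) - B (b+2*t)"
  proof (intro allI impI)
    fix t assume "t+2 \<le> Suc j'"
    then have "b + 2*t + 4 \<le> n" using b j' by simp
    moreover have e: "b+2*(t+2) = b+2*t+4" "b+2*(t+1) = b+2*t+2" by simp_all
    ultimately show "B(b+2*(t+2)) - B(b+2*(t+1)) \<le> B(b+2*(t+1)) - B (b+2*t)"
      unfolding e by (intro HB[rule_format])
  qed
  have L0: "B(b+2*Suc j') - B (b+2*0) \<ge> real (Suc j') * (B(b+2*Suc j') - B(b+2*j'))"
    using conc_lower[of j' "\<lambda>t. B(b+2*t)", OF hB] .
  have e2: "b+2*j' = b+2*j-2" "b+2*Suc j' = b+2*j" using j' by simp_all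
  have L: "B(b+2*j) - B b \<ge> real j * (B(b+2*j) - B(b+2*j-2))"
    using L0 unfolding e2 j'[symmetric] by simp
  have "real j * (A(a+2) - A a) \<le> real j * (B(b+2*j) - B(b+2*j-2))"
    using C by (intro mult_left_mono) auto
  then show ?thesis using U L by linarith
qed

lemma Hf_of:
  assumes "concave_arr n f"
  shows "\<forall>u. u+4 \<le> n \<longrightarrow> f(u+4) - f(u+2) \<le> f(u+2) - f u"
proof (intro allI impI)
  fix u assume u: "u+4 \<le> n"
  have c: "\<And>i j k. i + 2 \<le> n \<Longrightarrow> j = i+1 \<Longrightarrow> k = i+2 \<Longrightarrow> f k - f j \<le> f j - f i"
    using assms unfolding concave_arr_def by auto
  have "f (u+2) - f (u+1) \<le> f (u+1) - f u" by (rule c) (use u in auto)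
  moreover have "f (u+3) - f (u+2) \<le> f (u+2) - f (u+1)" by (rule c) (use u in auto)
  moreover have "f (u+4) - f (u+3) \<le> f (u+3) - f (u+2)" by (rule c) (use u in auto)
  ultimately show "f(u+4) - f(u+2) \<le> f(u+2) - f u" by linarith
qed

lemma Hg_of:
  assumes "osc_concave_arr n g"
  shows "\<forall>u. u+4 \<le> n \<longrightarrow> g(u+4) - g(u+2) \<le> g(u+2) - g u"
proof (intro allI impI)
  fix u assume u: "u+4 \<le> n"
  have c1: "\<And>k a b d. 1 \<le> k \<Longrightarrow> 2*k+2 \<le> n \<Longrightarrow> a = 2*k-2 \<Longrightarrow> b = 2*k \<Longrightarrow> d = 2*k+2 \<Longrightarrow> g d - g b \<le> g b - g a"
    and c4: "\<And>k a b d e. 2*k+3 \<le> n \<Longrightarrow> a = 2*(k+1)+1 \<Longrightarrow> b = 2*(k+1) \<Longrightarrow> d = 2*k+1 \<Longrightarrow> e = 2*k \<Longrightarrow> g a - g b \<le> g d - g e"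
    and c5: "\<And>k a b d e. 1 \<le> k \<Longrightarrow> 2*k+2 \<le> n \<Longrightarrow> a = 2*(k+1) \<Longrightarrow> b = 2*(k+1)-1 \<Longrightarrow> d = 2*k \<Longrightarrow> e = 2*k-1 \<Longrightarrow> g a - g b \<le> g d - g e"
    using assms unfolding osc_concave_arr_def by auto
  show "g(u+4) - g(u+2) \<le> g(u+2) - g u"
  proof (cases "even u")
    case True
    then obtain m where m: "u = 2*m" by auto
    show ?thesis by (rule c1[of "m+1"]) (use m u in auto)
  next
    case False
    then obtain m where m: "u = 2*m+1" using oddE by blast
    have A: "g (u+4) - g (u+3) \<le> g (u+2) - g (u+1)"
      by (rule c4[of "m+1"]) (use m u in auto)
    have B: "g (u+3) - g (u+2) \<le> g (u+1) - g u"
      by (rule c5[of "m+1"]) (use m u in auto)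
    show ?thesis using A B by linarith
  qed
qed

definition inv_xy :: "(nat \<Rightarrow> real) \<Rightarrow> (nat \<Rightarrow> real) \<Rightarrow> nat \<Rightarrow> nat \<Rightarrow> nat \<Rightarrow> nat \<Rightarrow> nat \<Rightarrow> bool" where
  "inv_xy f g n p c x y \<longleftrightarrow> p \<le> x \<and> even (x - p) \<and> c \<le> y \<and> even (y - c) \<and>
     (x + y \<le> n \<longrightarrow> (p+2 \<le> x \<longrightarrow> g(y+2) - g y \<le> f x - f(x-2)) \<and>
                     (c+2 \<le> y \<longrightarrow> f(x+2) - f x \<le> g y - g(y-2)))"

lemma inv_init: "inv_xy f g n p c p c"
  unfolding inv_xy_def by simp

lemma inv_step:
  assumes I: "inv_xy f g n p c x y"
    and Hf: "\<forall>u. u+4 \<le> n \<longrightarrow> f(u+4) - f(u+2) \<le> f(u+2) - f u"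
    and Hg: "\<forall>u. u+4 \<le> n \<longrightarrow> g(u+4) - g(u+2) \<le> g(u+2) - g u"
  shows "inv_xy f g n p c (if g(y+2) - g y \<le> f(x+2) - f x then x+2 else x)
                          (if g(y+2) - g y \<le> f(x+2) - f x then y else y+2)"
proof -
  have a: "p \<le> x" "even (x - p)" "c \<le> y" "even (y - c)" using I unfolding inv_xy_def by auto
  have I1: "x + y \<le> n \<Longrightarrow> p+2 \<le> x \<Longrightarrow> g(y+2) - g y \<le> f x - f(x-2)"
   and I2: "x + y \<le> n \<Longrightarrow> c+2 \<le> y \<Longrightarrow> f(x+2) - f x \<le> g y - g(y-2)"
    using I unfolding inv_xy_def by auto
  show ?thesis
  proof (cases "g(y+2) - g y \<le> f(x+2) - f x")
    case True
    have e: "x + 2 - 2 = x" "x + 2 + 2 = x + 4" by simp_all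
    have "x + 2 + y \<le> n \<Longrightarrow> c+2 \<le> y \<Longrightarrow> f(x+4) - f (x+2) \<le> g y - g(y-2)"
    proof -
      assume h: "x + 2 + y \<le> n" "c+2 \<le> y"
      then have "f(x+2) - f x \<le> g y - g(y-2)" using I2 by simp
      moreover have "f(x+4) - f(x+2) \<le> f(x+2) - f x" using Hf h by simp
      ultimately show ?thesis by linarith
    qed
    then have "inv_xy f g n p c (x+2) y"
      unfolding inv_xy_def e using True a by simp
    then show ?thesis using True by simp
  next
    case False
    have e: "y + 2 - 2 = y" "y + 2 + 2 = y + 4" by simp_all
    have "x + (y+2) \<le> n \<Longrightarrow> p+2 \<le> x \<Longrightarrow> g(y+4) - g (y+2) \<le> f x - f(x-2)"
    proof -
      assume h: "x + (y+2) \<le> n" "p+2 \<le> x"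
      then have "g(y+2) - g y \<le> f x - f(x-2)" using I1 by simp
      moreover have "g(y+4) - g(y+2) \<le> g(y+2) - g y" using Hg h by simp
      ultimately show ?thesis by linarith
    qed
    then have "inv_xy f g n p c x (y+2)"
      unfolding inv_xy_def e using False a by simp
    then show ?thesis using False by simp
  qed
qed

lemma mod2_iff: "(a::nat) mod 2 = b mod 2 \<longleftrightarrow> (even a \<longleftrightarrow> even b)"
  by (metis even_iff_mod_2_eq_zero odd_iff_mod_2_eq_one)
lemma A1: "(c::nat) \<le> y \<Longrightarrow> even (y - c) \<Longrightarrow> c = 0 \<or> c = 1 \<Longrightarrow> y mod 2 = c"
  by (metis evenE le_add_diff_inverse mod_mult_self2 mod_less nat_less_le one_less_numeral_iff semiring_norm(76) zero_less_numeral le_numeral_extra(1) mult.commute)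
lemma A2: "(p::nat) \<le> x \<Longrightarrow> even (x - p) \<Longrightarrow> x mod 2 = p mod 2"
  by (metis evenE le_add_diff_inverse mod_mult_self2 mult.commute)
lemma A3: "x + y = (i::nat) + d \<Longrightarrow> d mod 2 = y mod 2 \<Longrightarrow> i mod 2 = x mod 2"
  unfolding mod2_iff by (metis even_add)
lemma A4: "(x::nat) \<le> i \<Longrightarrow> i mod 2 = x mod 2 \<Longrightarrow> i = x + 2 * ((i - x) div 2)"
  unfolding mod2_iff by (simp add: even_diff_nat)
lemma A5: assumes "\<not> (x::nat) \<le> i" "i mod 2 = x mod 2" shows "x = i + 2 * ((x - i) div 2) \<and> 1 \<le> (x - i) div 2"
proof -
  have e: "x = i + 2 * ((x - i) div 2)" using assms unfolding mod2_iff by (simp add: even_diff_nat)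
  then have "(x - i) div 2 \<noteq> 0" using assms(1) by (metis add.right_neutral le_refl mult_0_right)
  then show ?thesis using e by simp
qed
lemma A6: "1 \<le> (i::nat) \<Longrightarrow> i mod 2 = x mod 2 \<Longrightarrow> x mod 2 = p mod 2 \<Longrightarrow> p = 1 \<or> p = 2 \<Longrightarrow> p \<le> i"
  unfolding mod2_iff by (cases "i = 1") auto

lemma inv_val:
  assumes I: "inv_xy f g n p c x y" and k: "x + y \<le> n"
    and Hf: "\<forall>u. u+4 \<le> n \<longrightarrow> f(u+4) - f(u+2) \<le> f(u+2) - f u"
    and Hg: "\<forall>u. u+4 \<le> n \<longrightarrow> g(u+4) - g(u+2) \<le> g(u+2) - g u"
    and p: "p = 1 \<or> p = 2" and c: "c = 0 \<or> c = 1"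
  shows "f x + g y = cmax f g c (x+y)"
  unfolding cmax_def
proof (rule sym, rule Max_eqI)
  have a: "p \<le> x" "even (x - p)" "c \<le> y" "even (y - c)" using I unfolding inv_xy_def by auto
  have I1: "p+2 \<le> x \<Longrightarrow> g(y+2) - g y \<le> f x - f(x-2)"
   and I2: "c+2 \<le> y \<Longrightarrow> f(x+2) - f x \<le> g y - g(y-2)" using I k unfolding inv_xy_def by auto
  have ym: "y mod 2 = c" using A1[OF a(3,4) c] .
  show "finite ((\<lambda>i. f i + g (x + y - i)) ` {i \<in> {1..x + y}. (x + y - i) mod 2 = c})" by simp
  show "f x + g y \<in> (\<lambda>i. f i + g (x + y - i)) ` {i \<in> {1..x + y}. (x + y - i) mod 2 = c}"
    using a p c ym by (intro image_eqI[where x=x]) auto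
  fix v assume "v \<in> (\<lambda>i. f i + g (x + y - i)) ` {i \<in> {1..x + y}. (x + y - i) mod 2 = c}"
  then obtain i where v: "v = f i + g (x+y-i)" and i: "1 \<le> i" "i \<le> x+y" "(x+y-i) mod 2 = c" by auto
  have xm: "x mod 2 = p mod 2" using A2[OF a(1,2)] .
  have d1: "x + y = i + (x + y - i)" using i(2) by simp
  have d2: "(x + y - i) mod 2 = y mod 2" using i(3) ym by simp
  have dd: "\<And>d. x + y = i + d \<Longrightarrow> d mod 2 = y mod 2 \<Longrightarrow> i mod 2 = x mod 2" by (rule A3)
  have im: "i mod 2 = x mod 2" using dd[OF d1 d2] .
  have ci: "c \<le> x + y - i" using i(3) c by auto
  have pi: "p \<le> i" using A6[OF i(1) im xm p] .
  show "v \<le> f x + g y"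
  proof (cases "x \<le> i")
    case True
    define j where "j = (i - x) div 2"
    have j: "i = x + 2*j" unfolding j_def using A4[OF True im] .
    show ?thesis
    proof (cases "j = 0")
      case True then show ?thesis using v j by simp
    next
      case False
      have b: "x + y - i + 2*j = y" using j i by simp
      have "c + 2 \<le> y" using False b ci by linarith
      then have C: "f(x+2) - f x \<le> g (x+y-i+2*j) - g (x+y-i+2*j-2)" using I2 b by simp
      have h1: "1 \<le> j" using False by simp
      have h2: "x + 2*j \<le> n" using j i(2) k by linarith
      have h3: "x + y - i + 2*j \<le> n" using b k by linarith
      have "f(x+2*j) + g (x+y-i) \<le> f x + g (x+y-i+2*j)"
        by (rule half[OF Hf Hg h1 h2 h3 C])
      then show ?thesis using v j b by simp
    qed
  next
    case False
    define j where "j = (x - i) div 2"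
    have j: "x = i + 2*j" "1 \<le> j" unfolding j_def using A5[OF False im] by auto
    have b: "x + y - i = y + 2*j" using j i by simp
    have "p + 2 \<le> x" using j pi by linarith
    then have C: "g(y+2) - g y \<le> f (i+2*j) - f (i+2*j-2)" using I1 j by simp
    have h2: "y + 2*j \<le> n" using b i(1) k by linarith
    have h3: "i + 2*j \<le> n" using j(1) k by linarith
    have "g(y+2*j) + f i \<le> g y + f (i+2*j)"
      by (rule half[OF Hg Hf j(2) h2 h3 C])
    then have "v \<le> g y + f (i+2*j)" using v[unfolded b] by linarith
    then show ?thesis unfolding j(1) by linarith
  qed
qed

lemma conv_split:
  assumes "2 \<le> k"
  shows "maxplus_conv f g k = max (cmax f g 0 k) (cmax f g 1 k)"
proof -
  define S0 where "S0 = {i \<in> {1..k}. (k - i) mod 2 = 0}"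
  define S1 where "S1 = {i \<in> {1..k}. (k - i) mod 2 = 1}"
  define h where "h = (\<lambda>i. f i + g (k - i))"
  have U: "{1..k} = S0 \<union> S1"
  proof -
    have "\<And>i::nat. i mod 2 = 0 \<or> i mod 2 = 1" by (simp add: mod2_eq_if)
    then show ?thesis unfolding S0_def S1_def by blast
  qed
  have n0: "k \<in> S0" using assms unfolding S0_def by simp
  have n1: "k - 1 \<in> S1" using assms unfolding S1_def by simp
  have "Max (h ` (S0 \<union> S1)) = max (Max (h ` S0)) (Max (h ` S1))"
    unfolding image_Un
    apply (rule Max_Un)
    subgoal unfolding S0_def by simp
    subgoal using n0 by blast
    subgoal unfolding S1_def by simp
    subgoal using n1 by blast
    done
  moreover have "maxplus_conv f g k = Max (h ` (S0 \<union> S1))" unfolding maxplus_conv_def h_def U by simp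
  moreover have "cmax f g 0 k = Max (h ` S0)" unfolding cmax_def h_def S0_def by simp
  moreover have "cmax f g 1 k = Max (h ` S1)" unfolding cmax_def h_def S1_def by simp
  ultimately show ?thesis by simp
qed

lemma conv_one: "maxplus_conv f g 1 = f 1 + g 0" "cmax f g 0 1 = f 1 + g 0"
proof -
  have "{1..1::nat} = {1}" "{i\<in>{1..1::nat}. (1-i) mod 2 = 0} = {1}" by auto
  then show "maxplus_conv f g 1 = f 1 + g 0" "cmax f g 0 1 = f 1 + g 0"
    unfolding maxplus_conv_def cmax_def by simp_all
qed

fun run :: "(nat \<Rightarrow> real) \<Rightarrow> (nat \<Rightarrow> real) \<Rightarrow> prog \<Rightarrow> mstate \<Rightarrow> nat \<times> mstate" where
  "run f g Skip s = (0, s)"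
| "run f g (Instr i) s = (1, step_instr f g i s)"
| "run f g (Seq p q) s = (let r1 = run f g p s; r2 = run f g q (snd r1) in (fst r1 + fst r2, snd r2))"
| "run f g (If b p q) s = (if eval_test b s then (let r = run f g p s in (fst r + 1, snd r))
                           else (let r = run f g q s in (fst r + 1, snd r)))"
| "run f g (While b p) s = (0, s)"

fun loopfree :: "prog \<Rightarrow> bool" where
  "loopfree Skip = True"
| "loopfree (Instr i) = True"
| "loopfree (Seq p q) = (loopfree p \<and> loopfree q)"
| "loopfree (If b p q) = (loopfree p \<and> loopfree q)"
| "loopfree (While b p) = False"

lemma run_exec: "loopfree p \<Longrightarrow> exec f g p s (fst (run f g p s)) (snd (run f g p s))"
proof (induction p arbitrary: s)
  case Skip then show ?case by (simp add: exec_Skip)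
next
  case (Instr i) then show ?case using exec_Instr[of f g i s] by simp
next
  case (Seq p q) then show ?case by (auto simp: Let_def intro: exec_Seq)
next
  case (If b p q)
  then show ?case
    using exec_IfT[of b s f g p "fst (run f g p s)" "snd (run f g p s)" q]
          exec_IfF[of b s f g q "fst (run f g q s)" "snd (run f g q s)" p]
    by (auto simp: Let_def)
next
  case (While b p) then show ?case by simp
qed

fun straight :: "instr list \<Rightarrow> prog" where
  "straight [] = Skip"
| "straight (i # is) = Seq (Instr i) (straight is)"

lemma loopfree_straight[simp]: "loopfree (straight is)"
  by (induction "is") auto

lemma while_rule:
  fixes I :: "mstate \<Rightarrow> bool" and \<mu> :: "mstate \<Rightarrow> nat"
  assumes step: "\<And>s. I s \<Longrightarrow> eval_test b s \<Longrightarrow> \<exists>t s'. exec f g p s t s' \<and> I s' \<and> t \<le> T \<and> \<mu> s' < \<mu> s"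
  shows "I s \<Longrightarrow> \<exists>t s'. exec f g (While b p) s t s' \<and> I s' \<and> \<not> eval_test b s' \<and> t \<le> (T+1) * \<mu> s + 1"
proof (induction "\<mu> s" arbitrary: s rule: less_induct)
  case less
  show ?case
  proof (cases "eval_test b s")
    case False
    have "exec f g (While b p) s 1 s" by (rule exec_WhileF[OF False])
    then show ?thesis using less.prems False by fastforce
  next
    case True
    obtain t1 s1 where 1: "exec f g p s t1 s1" "I s1" "t1 \<le> T" "\<mu> s1 < \<mu> s"
      using step[OF less.prems True] by blast
    obtain t2 s2 where 2: "exec f g (While b p) s1 t2 s2" "I s2" "\<not> eval_test b s2" "t2 \<le> (T+1) * \<mu> s1 + 1"
      using less.hyps[OF 1(4) 1(2)] by blast
    have "(T+1) * \<mu> s1 + (T + 1) \<le> (T+1) * \<mu> s"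
    proof -
      have "(T+1) * (\<mu> s1 + 1) \<le> (T+1) * \<mu> s" using 1(4) by (intro mult_le_mono2) simp
      then show ?thesis by (simp add: algebra_simps)
    qed
    then have "t1 + t2 + 1 \<le> (T+1) * \<mu> s + 1" using 1(3) 2(4) by linarith
    then show ?thesis using exec_WhileT[OF True 1(1) 2(1)] 2 by blast
  qed
qed

definition body :: "prog \<Rightarrow> prog" where
  "body emit = Seq (straight [ReadF 0 2, ReadG 1 3, RAdd 2 0 1, NAdd 6 1 7])
     (Seq emit (Seq (straight [NAdd 8 2 4, NAdd 9 3 4, ReadF 3 8, ReadG 4 9, RSub 5 3 0, RSub 6 4 1])
       (Seq (If (RLe 6 5) (Instr (NAdd 2 2 4)) (Instr (NAdd 3 3 4))) (Instr (NAdd 1 1 4)))))"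

definition emit_store :: prog where "emit_store = Instr (RStore 6 2)"
definition emit_out :: prog where
  "emit_out = Seq (Instr (RLoad 7 6)) (If (RLe 7 2) (Instr (WriteOut 1 2)) (Instr (WriteOut 1 7)))"

lemma body_store:
  assumes "nr s 4 = 2" "nr s 7 = 100"
  shows "fst (run f g (body emit_store) s) \<le> 20 \<and>
    nr (snd (run f g (body emit_store) s)) 1 = nr s 1 + 2 \<and>
    nr (snd (run f g (body emit_store) s)) 2 = (if g(nr s 3+2) - g (nr s 3) \<le> f(nr s 2+2) - f (nr s 2) then nr s 2+2 else nr s 2) \<and>
    nr (snd (run f g (body emit_store) s)) 3 = (if g(nr s 3+2) - g (nr s 3) \<le> f(nr s 2+2) - f (nr s 2) then nr s 3 else nr s 3 + 2) \<and>
    nr (snd (run f g (body emit_store) s)) 0 = nr s 0 \<and>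
    nr (snd (run f g (body emit_store) s)) 4 = 2 \<and>
    nr (snd (run f g (body emit_store) s)) 5 = nr s 5 \<and>
    nr (snd (run f g (body emit_store) s)) 7 = 100 \<and>
    (\<forall>a\<ge>8. rr (snd (run f g (body emit_store) s)) a = (if a = nr s 1 + 100 then f (nr s 2) + g (nr s 3) else rr s a)) \<and>
    outp (snd (run f g (body emit_store) s)) = outp s"
  using assms by (simp add: body_def emit_store_def Let_def)

lemma body_out:
  assumes "nr s 4 = 2" "nr s 7 = 100"
  shows "fst (run f g (body emit_out) s) \<le> 20 \<and>
    nr (snd (run f g (body emit_out) s)) 1 = nr s 1 + 2 \<and>
    nr (snd (run f g (body emit_out) s)) 2 = (if g(nr s 3+2) - g (nr s 3) \<le> f(nr s 2+2) - f (nr s 2) then nr s 2+2 else nr s 2) \<and>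
    nr (snd (run f g (body emit_out) s)) 3 = (if g(nr s 3+2) - g (nr s 3) \<le> f(nr s 2+2) - f (nr s 2) then nr s 3 else nr s 3 + 2) \<and>
    nr (snd (run f g (body emit_out) s)) 0 = nr s 0 \<and>
    nr (snd (run f g (body emit_out) s)) 4 = 2 \<and>
    nr (snd (run f g (body emit_out) s)) 5 = nr s 5 \<and>
    nr (snd (run f g (body emit_out) s)) 7 = 100 \<and>
    (\<forall>a\<ge>8. rr (snd (run f g (body emit_out) s)) a = rr s a) \<and>
    outp (snd (run f g (body emit_out) s)) = (outp s)(nr s 1 := max (f (nr s 2) + g (nr s 3)) (rr s (nr s 1 + 100)))"
  using assms by (simp add: body_def emit_out_def Let_def max_def)

definition cinit :: "nat \<Rightarrow> nat \<Rightarrow> prog" where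
  "cinit p c = straight [NConst 4 2, NConst 10 1, NAdd 5 0 10, NConst 7 100, NConst 1 (p+c), NConst 2 p, NConst 3 c]"

definition chain :: "nat \<Rightarrow> nat \<Rightarrow> prog \<Rightarrow> prog" where
  "chain p c emit = Seq (cinit p c) (While (NLess 1 5) (body emit))"

definition inch :: "nat \<Rightarrow> nat \<Rightarrow> nat \<Rightarrow> bool" where
  "inch p c k \<longleftrightarrow> p + c \<le> k \<and> even (k - (p+c))"

lemma cinit_run:
  "fst (run f g (cinit p c) s) = 7 \<and>
   nr (snd (run f g (cinit p c) s)) 0 = nr s 0 \<and>
   nr (snd (run f g (cinit p c) s)) 1 = p + c \<and>
   nr (snd (run f g (cinit p c) s)) 2 = p \<and>
   nr (snd (run f g (cinit p c) s)) 3 = c \<and>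
   nr (snd (run f g (cinit p c) s)) 4 = 2 \<and>
   nr (snd (run f g (cinit p c) s)) 5 = nr s 0 + 1 \<and>
   nr (snd (run f g (cinit p c) s)) 7 = 100 \<and>
   rr (snd (run f g (cinit p c) s)) = rr s \<and>
   outp (snd (run f g (cinit p c) s)) = outp s"
  by (simp add: cinit_def Let_def)

lemma inch_next: "inch p c k \<Longrightarrow> \<not> inch p c (k+1)"
proof
  assume a: "inch p c k" "inch p c (k+1)"
  then have "p + c \<le> k" unfolding inch_def by blast
  then have eq: "k + 1 - (p+c) = Suc (k - (p+c))" by linarith
  have "even (k - (p+c))" "even (k+1-(p+c))" using a unfolding inch_def by blast+
  then show False by (metis eq even_Suc)
qed

lemma chain_wrap:
  assumes I0: "I (snd (run f g (cinit p c) s0))"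
    and step: "\<And>s. I s \<Longrightarrow> eval_test (NLess 1 5) s \<Longrightarrow> \<exists>t s'. exec f g (body emit) s t s' \<and> I s' \<and> t \<le> 20 \<and> \<mu> s' < \<mu> s"
    and mu: "\<mu> (snd (run f g (cinit p c) s0)) \<le> n + 2"
  shows "\<exists>t s'. exec f g (chain p c emit) s0 t s' \<and> I s' \<and> \<not> eval_test (NLess 1 5) s' \<and> t \<le> 21*(n+2)+8"
proof -
  let ?s1 = "snd (run f g (cinit p c) s0)"
  have t7: "fst (run f g (cinit p c) s0) = 7" using cinit_run[of f g p c s0] by blast
  have "exec f g (cinit p c) s0 (fst (run f g (cinit p c) s0)) ?s1"
    by (rule run_exec) (simp add: cinit_def)
  then have e1: "exec f g (cinit p c) s0 7 ?s1" unfolding t7 .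
  obtain t s' where w: "exec f g (While (NLess 1 5) (body emit)) ?s1 t s'" "I s'" "\<not> eval_test (NLess 1 5) s'"
     "t \<le> (20+1) * \<mu> ?s1 + 1"
    using while_rule[of I "NLess 1 5" f g "body emit" 20 \<mu>, OF step I0] by blast
  have "(20+1) * \<mu> ?s1 \<le> 21 * (n+2)" using mu by simp
  then have "t \<le> 21 * (n+2) + 1" using w(4) by linarith
  then have "7 + t \<le> 21*(n+2)+8" by simp
  moreover have "exec f g (chain p c emit) s0 (7 + t) s'" unfolding chain_def by (rule exec_Seq[OF e1 w(1)])
  ultimately show ?thesis using w by blast
qed

definition IS :: "(nat \<Rightarrow> real) \<Rightarrow> (nat \<Rightarrow> real) \<Rightarrow> nat \<Rightarrow> nat \<Rightarrow> nat \<Rightarrow> mstate \<Rightarrow> mstate \<Rightarrow> bool" where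
  "IS f g n p c s0 s \<longleftrightarrow> nr s 0 = n \<and> nr s 4 = 2 \<and> nr s 5 = n+1 \<and> nr s 7 = 100 \<and>
     nr s 1 = nr s 2 + nr s 3 \<and> inv_xy f g n p c (nr s 2) (nr s 3) \<and> outp s = outp s0 \<and>
     (\<forall>a\<ge>8. rr s a = (if 100 < a \<and> a - 100 < nr s 1 \<and> a - 100 \<le> n \<and> inch p c (a-100)
                        then cmax f g c (a-100) else rr s0 a))"

lemma inv_inch:
  assumes "inv_xy f g n p c x y" shows "inch p c (x+y)"
proof -
  have "p \<le> x" "even (x - p)" "c \<le> y" "even (y - c)" using assms unfolding inv_xy_def by blast+
  then obtain u v where "x = p + 2*u" "y = c + 2*v"
    by (metis evenE le_add_diff_inverse)
  then show ?thesis unfolding inch_def by simp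
qed

lemma chain_store:
  assumes Hf: "\<forall>u. u+4 \<le> n \<longrightarrow> f(u+4) - f(u+2) \<le> f(u+2) - f u"
    and Hg: "\<forall>u. u+4 \<le> n \<longrightarrow> g(u+4) - g(u+2) \<le> g(u+2) - g u"
    and p: "p = 1 \<or> p = 2" and c: "c = 0 \<or> c = 1" and n: "nr s0 0 = n"
  shows "\<exists>t s'. exec f g (chain p c emit_store) s0 t s' \<and> t \<le> 21*(n+2)+8 \<and> nr s' 0 = n \<and>
     outp s' = outp s0 \<and>
     (\<forall>a\<ge>8. rr s' a = (if 100 < a \<and> a - 100 \<le> n \<and> inch p c (a-100) then cmax f g c (a-100) else rr s0 a))"
proof -
  let ?\<mu> = "\<lambda>s. n + 2 - nr s 1"
  have I0: "IS f g n p c s0 (snd (run f g (cinit p c) s0))"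
    using cinit_run[of f g p c s0] n inv_init[of f g n p c] unfolding IS_def inch_def by auto
  have step: "\<exists>t s'. exec f g (body emit_store) s t s' \<and> IS f g n p c s0 s' \<and> t \<le> 20 \<and> ?\<mu> s' < ?\<mu> s"
    if I: "IS f g n p c s0 s" and T: "eval_test (NLess 1 5) s" for s
  proof -
    let ?s' = "snd (run f g (body emit_store) s)"
    let ?x = "nr s 2" and ?y = "nr s 3" and ?k = "nr s 1"
    have B: "nr s 4 = 2" "nr s 7 = 100" using I unfolding IS_def by auto
    note bs = body_store[OF B, of f g]
    have kn: "?k \<le> n" using I T unfolding IS_def by simp
    have ix: "inv_xy f g n p c ?x ?y" and k: "?k = ?x + ?y" using I unfolding IS_def by auto
    have val: "f ?x + g ?y = cmax f g c ?k" using inv_val[OF ix _ Hf Hg p c] k kn by simp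
    have ik: "inch p c ?k" using inv_inch[OF ix] k by simp
    have ik1: "\<not> inch p c (?k+1)" using inch_next[OF ik] .
    have k1: "1 \<le> ?k" using ik p unfolding inch_def by auto
    have ex: "exec f g (body emit_store) s (fst (run f g (body emit_store) s)) ?s'"
      by (rule run_exec) (simp add: body_def emit_store_def)
    have inv': "inv_xy f g n p c (nr ?s' 2) (nr ?s' 3)"
      using inv_step[OF ix Hf Hg] bs by simp
    have rr': "\<forall>a\<ge>8. rr ?s' a = (if 100 < a \<and> a - 100 < nr ?s' 1 \<and> a - 100 \<le> n \<and> inch p c (a-100)
                        then cmax f g c (a-100) else rr s0 a)"
    proof (intro allI impI)
      fix a :: nat assume a: "8 \<le> a"
      show "rr ?s' a = (if 100 < a \<and> a - 100 < nr ?s' 1 \<and> a - 100 \<le> n \<and> inch p c (a-100)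
                        then cmax f g c (a-100) else rr s0 a)"
      proof (cases "a = ?k + 100")
        case True
        then show ?thesis using bs a val kn ik True k1 by simp
      next
        case False
        have old: "rr s a = (if 100 < a \<and> a - 100 < ?k \<and> a - 100 \<le> n \<and> inch p c (a-100)
                        then cmax f g c (a-100) else rr s0 a)" using I a unfolding IS_def by auto
        have "(100 < a \<and> a - 100 < ?k + 2 \<and> a - 100 \<le> n \<and> inch p c (a-100)) =
              (100 < a \<and> a - 100 < ?k \<and> a - 100 \<le> n \<and> inch p c (a-100))"
        proof -
          have "a - 100 \<noteq> ?k" using False k1 by auto
          moreover have "100 < a \<Longrightarrow> a - 100 = ?k + 1 \<Longrightarrow> \<not> inch p c (a-100)" using ik1 by simp
          ultimately show ?thesis by (cases "a - 100 = ?k + 1") auto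
        qed
        then show ?thesis using bs a False old by simp
      qed
    qed
    have "IS f g n p c s0 ?s'"
      unfolding IS_def using I bs inv' rr' unfolding IS_def by (auto split: if_splits)
    moreover have "?\<mu> ?s' < ?\<mu> s" using bs kn by simp
    moreover have "fst (run f g (body emit_store) s) \<le> 20" using bs by simp
    ultimately show ?thesis using ex by blast
  qed
  have mu: "?\<mu> (snd (run f g (cinit p c) s0)) \<le> n + 2" by simp
  obtain t s' where r: "exec f g (chain p c emit_store) s0 t s'" "IS f g n p c s0 s'"
      "\<not> eval_test (NLess 1 5) s'" "t \<le> 21*(n+2)+8"
    using chain_wrap[where I="IS f g n p c s0" and \<mu>="?\<mu>", OF I0 step mu] by blast
  have "nr s' 1 \<ge> n + 1" using r(2,3) unfolding IS_def by simp
  then have "\<forall>a\<ge>8. rr s' a = (if 100 < a \<and> a - 100 \<le> n \<and> inch p c (a-100) then cmax f g c (a-100) else rr s0 a)"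
    using r(2) unfolding IS_def by (metis (no_types, lifting) Suc_eq_plus1 le_imp_less_Suc less_le_trans)
  then show ?thesis using r unfolding IS_def by blast
qed

definition IO :: "(nat \<Rightarrow> real) \<Rightarrow> (nat \<Rightarrow> real) \<Rightarrow> nat \<Rightarrow> nat \<Rightarrow> mstate \<Rightarrow> mstate \<Rightarrow> bool" where
  "IO f g n p s0 s \<longleftrightarrow> nr s 0 = n \<and> nr s 4 = 2 \<and> nr s 5 = n+1 \<and> nr s 7 = 100 \<and>
     nr s 1 = nr s 2 + nr s 3 \<and> inv_xy f g n p 0 (nr s 2) (nr s 3) \<and>
     (\<forall>a\<ge>8. rr s a = rr s0 a) \<and>
     (\<forall>k. outp s k = (if inch p 0 k \<and> k < nr s 1 \<and> k \<le> n then maxplus_conv f g k else outp s0 k))"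

lemma chain_out:
  assumes Hf: "\<forall>u. u+4 \<le> n \<longrightarrow> f(u+4) - f(u+2) \<le> f(u+2) - f u"
    and Hg: "\<forall>u. u+4 \<le> n \<longrightarrow> g(u+4) - g(u+2) \<le> g(u+2) - g u"
    and p: "p = 1 \<or> p = 2" and n: "nr s0 0 = n"
    and pre: "\<forall>k. inch p 0 k \<and> k \<le> n \<longrightarrow> max (cmax f g 0 k) (rr s0 (k+100)) = maxplus_conv f g k"
  shows "\<exists>t s'. exec f g (chain p 0 emit_out) s0 t s' \<and> t \<le> 21*(n+2)+8 \<and> nr s' 0 = n \<and>
     (\<forall>a\<ge>8. rr s' a = rr s0 a) \<and>
     (\<forall>k. outp s' k = (if inch p 0 k \<and> k \<le> n then maxplus_conv f g k else outp s0 k))"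
proof -
  let ?\<mu> = "\<lambda>s. n + 2 - nr s 1"
  have I0: "IO f g n p s0 (snd (run f g (cinit p 0) s0))"
    using cinit_run[of f g p 0 s0] n inv_init[of f g n p 0] unfolding IO_def inch_def by auto
  have step: "\<exists>t s'. exec f g (body emit_out) s t s' \<and> IO f g n p s0 s' \<and> t \<le> 20 \<and> ?\<mu> s' < ?\<mu> s"
    if I: "IO f g n p s0 s" and T: "eval_test (NLess 1 5) s" for s
  proof -
    let ?s' = "snd (run f g (body emit_out) s)"
    let ?x = "nr s 2" and ?y = "nr s 3" and ?k = "nr s 1"
    have B: "nr s 4 = 2" "nr s 7 = 100" using I unfolding IO_def by auto
    note bs = body_out[OF B, of f g]
    have kn: "?k \<le> n" using I T unfolding IO_def by simp
    have ix: "inv_xy f g n p 0 ?x ?y" and k: "?k = ?x + ?y" using I unfolding IO_def by auto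
    have val: "f ?x + g ?y = cmax f g 0 ?k" using inv_val[OF ix _ Hf Hg p] k kn by simp
    have ik: "inch p 0 ?k" using inv_inch[OF ix] k by simp
    have ik1: "\<not> inch p 0 (?k+1)" using inch_next[OF ik] .
    have rrk: "rr s (?k + 100) = rr s0 (?k + 100)" using I unfolding IO_def by auto
    have mk: "max (f ?x + g ?y) (rr s (?k + 100)) = maxplus_conv f g ?k"
      using pre ik kn val rrk by simp
    have ex: "exec f g (body emit_out) s (fst (run f g (body emit_out) s)) ?s'"
      by (rule run_exec) (simp add: body_def emit_out_def)
    have inv': "inv_xy f g n p 0 (nr ?s' 2) (nr ?s' 3)"
      using inv_step[OF ix Hf Hg] bs by simp
    have out': "\<forall>j. outp ?s' j = (if inch p 0 j \<and> j < nr ?s' 1 \<and> j \<le> n then maxplus_conv f g j else outp s0 j)"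
    proof
      fix j
      show "outp ?s' j = (if inch p 0 j \<and> j < nr ?s' 1 \<and> j \<le> n then maxplus_conv f g j else outp s0 j)"
      proof (cases "j = ?k")
        case True
        then show ?thesis using bs mk kn ik by simp
      next
        case False
        have old: "outp s j = (if inch p 0 j \<and> j < ?k \<and> j \<le> n then maxplus_conv f g j else outp s0 j)"
          using I unfolding IO_def by auto
        have "(inch p 0 j \<and> j < ?k + 2 \<and> j \<le> n) = (inch p 0 j \<and> j < ?k \<and> j \<le> n)"
          using False ik1 by (cases "j = ?k + 1") auto
        then show ?thesis using bs False old by simp
      qed
    qed
    have "IO f g n p s0 ?s'"
      unfolding IO_def using I bs inv' out' unfolding IO_def by (auto split: if_splits)
    moreover have "?\<mu> ?s' < ?\<mu> s" using bs kn by simp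
    moreover have "fst (run f g (body emit_out) s) \<le> 20" using bs by simp
    ultimately show ?thesis using ex by blast
  qed
  have mu: "?\<mu> (snd (run f g (cinit p 0) s0)) \<le> n + 2" by simp
  obtain t s' where r: "exec f g (chain p 0 emit_out) s0 t s'" "IO f g n p s0 s'"
      "\<not> eval_test (NLess 1 5) s'" "t \<le> 21*(n+2)+8"
    using chain_wrap[where I="IO f g n p s0" and \<mu>="?\<mu>", OF I0 step mu] by blast
  have "nr s' 1 \<ge> n + 1" using r(2,3) unfolding IO_def by simp
  then have "\<forall>k. outp s' k = (if inch p 0 k \<and> k \<le> n then maxplus_conv f g k else outp s0 k)"
    using r(2) unfolding IO_def by (metis (no_types, lifting) Suc_eq_plus1 le_imp_less_Suc less_le_trans)
  then show ?thesis using r unfolding IO_def by blast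
qed

definition init101 :: prog where
  "init101 = straight [NConst 2 1, ReadF 0 2, ReadG 1 3, RAdd 2 0 1, NConst 6 101, RStore 6 2]"

definition mainprog :: prog where
  "mainprog = Seq init101 (Seq (chain 1 1 emit_store) (Seq (chain 2 1 emit_store)
                (Seq (chain 1 0 emit_out) (chain 2 0 emit_out))))"

lemma init101_run:
  "fst (run f g init101 (init_state n)) = 6 \<and>
   nr (snd (run f g init101 (init_state n))) 0 = n \<and>
   (\<forall>a\<ge>8. rr (snd (run f g init101 (init_state n))) a = (if a = 101 then f 1 + g 0 else 0))"
  by (simp add: init101_def init_state_def Let_def)

lemma par1: "1 \<le> k \<Longrightarrow> inch 1 0 k \<or> inch 2 0 k"
  unfolding inch_def by (cases "k = 1") (auto simp: even_diff_nat)
lemma par2: "2 \<le> k \<Longrightarrow> inch 1 1 k \<or> inch 2 1 k"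
  unfolding inch_def by (cases "k = 2") (auto simp: even_diff_nat)
lemma par3: "\<not> inch 1 1 1" "\<not> inch 2 1 1"
  unfolding inch_def by auto

lemma main_prop:
  shows "\<forall>n (f :: nat \<Rightarrow> real) (g :: nat \<Rightarrow> real).
           concave_arr n f \<and> osc_concave_arr n g \<longrightarrow>
           (\<exists>t s. exec f g mainprog (init_state n) t s \<and> t \<le> 400 * (n + 1) \<and>
                  (\<forall>k \<in> {1..n}. outp s k = maxplus_conv f g k))"
proof (intro allI impI)
  fix n and f g :: "nat \<Rightarrow> real"
  assume "concave_arr n f \<and> osc_concave_arr n g"
  then have Hf: "\<forall>u. u+4 \<le> n \<longrightarrow> f(u+4) - f(u+2) \<le> f(u+2) - f u"
    and Hg: "\<forall>u. u+4 \<le> n \<longrightarrow> g(u+4) - g(u+2) \<le> g(u+2) - g u"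
    using Hf_of Hg_of by blast+
  let ?s0 = "init_state n"
  let ?s1 = "snd (run f g init101 ?s0)"
  have ir: "fst (run f g init101 ?s0) = 6" "nr ?s1 0 = n"
     "\<forall>a\<ge>8. rr ?s1 a = (if a = 101 then f 1 + g 0 else 0)"
    using init101_run[of f g n] by blast+
  have "exec f g init101 ?s0 (fst (run f g init101 ?s0)) ?s1"
    by (rule run_exec) (simp add: init101_def)
  then have e1: "exec f g init101 ?s0 6 ?s1" unfolding ir(1) .
  obtain t2 s2 where c2: "exec f g (chain 1 1 emit_store) ?s1 t2 s2" "t2 \<le> 21*(n+2)+8" "nr s2 0 = n"
     "\<forall>a\<ge>8. rr s2 a = (if 100 < a \<and> a - 100 \<le> n \<and> inch 1 1 (a-100) then cmax f g 1 (a-100) else rr ?s1 a)"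
    using chain_store[OF Hf Hg _ _ ir(2), of 1 1] by auto
  obtain t3 s3 where c3: "exec f g (chain 2 1 emit_store) s2 t3 s3" "t3 \<le> 21*(n+2)+8" "nr s3 0 = n"
     "\<forall>a\<ge>8. rr s3 a = (if 100 < a \<and> a - 100 \<le> n \<and> inch 2 1 (a-100) then cmax f g 1 (a-100) else rr s2 a)"
    using chain_store[OF Hf Hg _ _ c2(3), of 2 1] by auto
  have R: "max (cmax f g 0 k) (rr s3 (k+100)) = maxplus_conv f g k" if k: "1 \<le> k" "k \<le> n" for k
  proof (cases "k = 1")
    case True
    have "rr s3 (k+100) = f 1 + g 0" using c3(4) c2(4) ir(3) par3 True by simp
    then show ?thesis using True conv_one[of f g] by simp
  next
    case False
    then have "2 \<le> k" using k by simp
    then have "rr s3 (k+100) = cmax f g 1 k" using c3(4) c2(4) par2[of k] k by auto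
    then show ?thesis using conv_split[OF \<open>2 \<le> k\<close>] by simp
  qed
  have pre1: "\<forall>k. inch 1 0 k \<and> k \<le> n \<longrightarrow> max (cmax f g 0 k) (rr s3 (k+100)) = maxplus_conv f g k"
    using R unfolding inch_def by auto
  obtain t4 s4 where c4: "exec f g (chain 1 0 emit_out) s3 t4 s4" "t4 \<le> 21*(n+2)+8" "nr s4 0 = n"
     "\<forall>a\<ge>8. rr s4 a = rr s3 a"
     "\<forall>k. outp s4 k = (if inch 1 0 k \<and> k \<le> n then maxplus_conv f g k else outp s3 k)"
    using chain_out[OF Hf Hg _ c3(3) pre1] by auto
  have pre2: "\<forall>k. inch 2 0 k \<and> k \<le> n \<longrightarrow> max (cmax f g 0 k) (rr s4 (k+100)) = maxplus_conv f g k"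
    using R c4(4) unfolding inch_def by auto
  obtain t5 s5 where c5: "exec f g (chain 2 0 emit_out) s4 t5 s5" "t5 \<le> 21*(n+2)+8"
     "\<forall>k. outp s5 k = (if inch 2 0 k \<and> k \<le> n then maxplus_conv f g k else outp s4 k)"
    using chain_out[OF Hf Hg _ c4(3) pre2] by auto
  have ex: "exec f g mainprog ?s0 (6 + (t2 + (t3 + (t4 + t5)))) s5"
    unfolding mainprog_def
    by (rule exec_Seq[OF e1 exec_Seq[OF c2(1) exec_Seq[OF c3(1) exec_Seq[OF c4(1) c5(1)]]]])
  have "6 + (t2 + (t3 + (t4 + t5))) \<le> 400 * (n+1)" using c2(2) c3(2) c4(2) c5(2) by (simp add: algebra_simps)
  moreover have "\<forall>k\<in>{1..n}. outp s5 k = maxplus_conv f g k"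
  proof
    fix k assume "k \<in> {1..n}"
    then show "outp s5 k = maxplus_conv f g k" using c5(3) c4(5) par1[of k] by auto
  qed
  ultimately show "\<exists>t s. exec f g mainprog (init_state n) t s \<and> t \<le> 400 * (n + 1) \<and>
                  (\<forall>k \<in> {1..n}. outp s k = maxplus_conv f g k)" using ex by blast
qed

theorem lemma6:
  shows "\<exists>(p :: prog) (C :: nat). \<forall>n (f :: nat \<Rightarrow> real) (g :: nat \<Rightarrow> real).
           concave_arr n f \<and> osc_concave_arr n g \<longrightarrow>
           (\<exists>t s. exec f g p (init_state n) t s \<and> t \<le> C * (n + 1) \<and>
                  (\<forall>k \<in> {1..n}. outp s k = maxplus_conv f g k))"
  using main_prop by blast

end
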